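(* For every $n\ge2$, $$LLT_n[X;q]\;=\;\sum_{k=1}^n(-1)^{k-1}(q;q)_{k-1}\begin{bmatrix}n-1\\k-1\end{bmatrix}_q e_k[X]\;LLT_{n-k}[X;q].$$
   Context: $(q;q)_k=(1-q)\cdots(1-q^k)$, and $\begin{bmatrix}n\\k\end{bmatrix}_q=\frac{(q;q)_n}{(q;q)_k(q;q)_{n-k}}$ is the $q$-binomial coefficient. For $m\ge1$, $LLT_m[X;q]$ is the LLT polynomial $LLT_D[X;q]$ of the zero-area Dyck path $D=(NE)^m$ in the $m\times m$ lattice square, and $LLT_0=1$. The LLT polynomial of a Dyck path $D$ in the $m\times m$ square is defined as follows. Let $a_i$ be the number of full cells in row $i$ between $D$ and the diagonal. A parking function on $D$ labels the cells right of the North steps bijectively by cars $1,\dots,m$, increasing up columns; $c_i$ is the car in row $i$. Pairs of rows $i<j$ give a dinv if either $a_i=a_j$ and $c_i<c_j$, or $a_i=a_j+1$ and $c_i>c_j$; $\mathrm{dinv}(PF)$ counts these. $\sigma(PF)$ reads the cars by diagonals from highest to lowest, each diagonal from right to left. $\mathrm{pides}(PF)$ is the composition encoding the descent set of $\sigma(PF)^{-1}$. Then $LLT_D[X;q]=\sum_{PF}q^{\mathrm{dinv}(PF)}F_{\mathrm{pides}(PF)}[X]$, with $F_\alpha$ Gessel's fundamental quasisymmetric functions. (Equivalently, $LLT_m[X;q]=(q;q)_m\,h_m[X/(1-q)]$ in plethystic notation.) *)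

theory Defs
  imports Main
begin

text \<open>Symmetric functions are represented by their specialisations to finitely many
variables x 0, ..., x (N-1) with values in a field; q is a scalar of the same field.\<close>

definition qpoch :: "'a::field \<Rightarrow> nat \<Rightarrow> 'a" where
  "qpoch q k = (\<Prod>i=1..k. 1 - q ^ i)"

definition qbinom :: "'a::field \<Rightarrow> nat \<Rightarrow> nat \<Rightarrow> 'a" where
  "qbinom q n k = qpoch q n / (qpoch q k * qpoch q (n - k))"

definition elem :: "nat \<Rightarrow> nat \<Rightarrow> (nat \<Rightarrow> 'a::field) \<Rightarrow> 'a" where
  "elem N k x = (\<Sum>A\<in>{A. A \<subseteq> {..<N} \<and> card A = k}. \<Prod>i\<in>A. x i)"

definition fundQ :: "nat \<Rightarrow> nat \<Rightarrow> nat set \<Rightarrow> (nat \<Rightarrow> 'a::field) \<Rightarrow> 'a" where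
  "fundQ N n S x = (\<Sum>is\<in>{is. length is = n \<and> (\<forall>i\<in>set is. i < N) \<and>
        (\<forall>j. Suc j < n \<longrightarrow> is ! j \<le> is ! Suc j \<and> (Suc j \<in> S \<longrightarrow> is ! j < is ! Suc j))}.
      prod_list (map x is))"

text \<open>A Dyck path in the m x m square is given by its area sequence a (row i is a ! (i-1),
rows indexed from 0 here). Rows i, i+1 lie in the same column iff a!(i+1) = a!i + 1.
A parking function is the list c of cars, c ! i being the car in row i.\<close>
definition dyck_area :: "nat list \<Rightarrow> bool" where
  "dyck_area a = ((a \<noteq> [] \<longrightarrow> a ! 0 = 0) \<and> (\<forall>i. Suc i < length a \<longrightarrow> a ! Suc i \<le> Suc (a ! i)))"

definition parking_functions :: "nat list \<Rightarrow> nat list set" where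
  "parking_functions a = {c. length c = length a \<and> distinct c \<and> set c = {1..length a} \<and>
      (\<forall>i. Suc i < length a \<longrightarrow> a ! Suc i = Suc (a ! i) \<longrightarrow> c ! i < c ! Suc i)}"

definition dinv :: "nat list \<Rightarrow> nat list \<Rightarrow> nat" where
  "dinv a c = card {(i, j). i < j \<and> j < length a \<and>
      ((a ! i = a ! j \<and> c ! i < c ! j) \<or> (a ! i = Suc (a ! j) \<and> c ! i > c ! j))}"

text \<open>Position (0-based) of row i in the reading word: rows on higher diagonals first,
within a diagonal from right to left, i.e. by decreasing row index.\<close>
definition read_pos :: "nat list \<Rightarrow> nat \<Rightarrow> nat" where
  "read_pos a i = card {j. j < length a \<and> (a ! j > a ! i \<or> (a ! j = a ! i \<and> j > i))}"

definition sigma_word :: "nat list \<Rightarrow> nat list \<Rightarrow> nat list" where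
  "sigma_word a c = map (\<lambda>p. c ! (THE i. i < length a \<and> read_pos a i = p)) [0..<length a]"

text \<open>Descent set of the inverse of a permutation word w of {1..m}: v is a descent of
w^{-1} iff v+1 occurs before v in w.\<close>
definition pos_in :: "nat list \<Rightarrow> nat \<Rightarrow> nat" where
  "pos_in w v = (THE p. p < length w \<and> w ! p = v)"

definition ides :: "nat list \<Rightarrow> nat set" where
  "ides w = {v. 1 \<le> v \<and> v < length w \<and> pos_in w (Suc v) < pos_in w v}"

definition pides :: "nat list \<Rightarrow> nat list \<Rightarrow> nat set" where
  "pides a c = ides (sigma_word a c)"

definition LLT_D :: "nat \<Rightarrow> nat list \<Rightarrow> 'a::field \<Rightarrow> (nat \<Rightarrow> 'a) \<Rightarrow> 'a" where
  "LLT_D N a q x = (\<Sum>c\<in>parking_functions a. q ^ dinv a c * fundQ N (length a) (pides a c) x)"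

text \<open>LLT_m: the zero-area Dyck path (NE)^m has area sequence replicate m 0; LLT_0 = 1.\<close>
definition LLT :: "nat \<Rightarrow> nat \<Rightarrow> 'a::field \<Rightarrow> (nat \<Rightarrow> 'a) \<Rightarrow> 'a" where
  "LLT N m q x = (if m = 0 then 1 else LLT_D N (replicate m 0) q x)"

end

theory Submission
  imports Defs "HOL-Computational_Algebra.Formal_Power_Series"
begin


definition words :: "nat \<Rightarrow> nat \<Rightarrow> nat list set" where
  "words N m = {u. length u = m \<and> (\<forall>i\<in>set u. i < N)}"

definition stat :: "nat list \<Rightarrow> nat" where
  "stat u = card {(i, j). i < j \<and> j < length u \<and> u ! i < u ! j}"

definition W :: "nat \<Rightarrow> nat \<Rightarrow> 'a::field \<Rightarrow> (nat \<Rightarrow> 'a) \<Rightarrow> 'a" where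
  "W N m q x = (\<Sum>u\<in>words N m. q ^ stat u * prod_list (map x u))"

lemma finite_words: "finite (words N m)"
proof -
  have "words N m \<subseteq> {u. set u \<subseteq> {..<N} \<and> length u = m}" unfolding words_def by auto
  thus ?thesis using finite_lists_length_eq[of "{..<N}" m] by (metis (no_types, lifting) finite_lessThan finite_subset)
qed

lemma stat_Cons: "stat (a # u) = length (filter (\<lambda>b. a < b) u) + stat u"
proof -
  let ?S = "{(i, j). i < j \<and> j < length (a#u) \<and> (a#u) ! i < (a#u) ! j}"
  let ?A = "(\<lambda>j. (0::nat, Suc j)) ` {j. j < length u \<and> a < u ! j}"
  let ?B = "(\<lambda>(i,j). (Suc i, Suc j)) ` {(i, j). i < j \<and> j < length u \<and> u ! i < u ! j}"
  have "?S = ?A \<union> ?B"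
  proof (rule set_eqI, clarify)
    fix i j
    show "((i,j) \<in> ?S) = ((i,j) \<in> ?A \<union> ?B)"
      by (cases i; cases j) auto
  qed
  moreover have "?A \<inter> ?B = {}" by auto
  moreover have "finite ?B"
    by (rule finite_imageI, rule finite_subset[of _ "{..<length u} \<times> {..<length u}"]) auto
  moreover have "finite ?A" by auto
  moreover have "card ?A = length (filter (\<lambda>b. a < b) u)"
    by (subst card_image) (auto simp: inj_on_def length_filter_conv_card)
  moreover have "card ?B = stat u"
    unfolding stat_def by (subst card_image) (auto simp: inj_on_def)
  ultimately show ?thesis unfolding stat_def by (simp add: card_Un_disjoint)
qed

lemma prod_list_scale:
  fixes x :: "nat \<Rightarrow> 'a::field"
  shows "prod_list (map (\<lambda>b. if b < k then x b else q * x b) u) =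
   q ^ length (filter (\<lambda>b. \<not> b < k) u) * prod_list (map x u)"
  by (induction u) (auto simp: mult_ac)

lemma words_Suc: "words N (Suc m) = (\<lambda>(a,u). a # u) ` ({..<N} \<times> words N m)"
proof (rule set_eqI)
  fix v show "v \<in> words N (Suc m) \<longleftrightarrow> v \<in> (\<lambda>(a,u). a # u) ` ({..<N} \<times> words N m)"
    by (cases v) (auto simp: words_def)
qed

lemma W_0: "W N 0 q x = 1"
proof -
  have "words N 0 = {[]}" by (auto simp: words_def)
  thus ?thesis by (simp add: W_def stat_def)
qed

lemma W_Suc: "W N (Suc m) q x =
   (\<Sum>a<N. x a * W N m q (\<lambda>b. if b < Suc a then x b else q * x b))"
proof -
  have inj: "inj_on (\<lambda>(a,u). a # u) ({..<N} \<times> words N m)" by (auto simp: inj_on_def)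
  have "W N (Suc m) q x = (\<Sum>(a,u)\<in>{..<N} \<times> words N m. q ^ stat (a#u) * prod_list (map x (a#u)))"
    unfolding W_def words_Suc by (subst sum.reindex[OF inj]) (simp add: case_prod_unfold)
  also have "\<dots> = (\<Sum>a<N. \<Sum>u\<in>words N m. x a * (q ^ stat u * prod_list (map (\<lambda>b. if b < Suc a then x b else q * x b) u)))"
  proof (subst sum.cartesian_product[symmetric], intro sum.cong refl)
    fix a u
    have "filter (\<lambda>b. \<not> b < Suc a) u = filter (\<lambda>b. a < b) u" by (intro filter_cong) auto
    then show "q ^ stat (a#u) * prod_list (map x (a#u)) =
        x a * (q ^ stat u * prod_list (map (\<lambda>b. if b < Suc a then x b else q * x b) u))"
      by (simp add: stat_Cons prod_list_scale power_add algebra_simps)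
  qed
  finally show ?thesis by (simp add: W_def sum_distrib_left)
qed



definition prec :: "nat list \<Rightarrow> nat \<Rightarrow> nat \<Rightarrow> bool" where
  "prec u i j = (u ! i < u ! j \<or> (u ! i = u ! j \<and> j < i))"

definition rank :: "nat list \<Rightarrow> nat \<Rightarrow> nat" where
  "rank u j = card {i. i < length u \<and> prec u i j}"

definition std :: "nat list \<Rightarrow> nat list" where
  "std u = map (\<lambda>j. Suc (rank u j)) [0..<length u]"

lemma prec_irrefl: "\<not> prec u i i" by (simp add: prec_def)
lemma prec_trans: "prec u i j \<Longrightarrow> prec u j k \<Longrightarrow> prec u i k" by (auto simp: prec_def)
lemma prec_total: "i \<noteq> j \<Longrightarrow> prec u i j \<or> prec u j i" by (auto simp: prec_def)

lemma rank_lt: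
  assumes "i < length u" "prec u i j"
  shows "rank u i < rank u j"
  unfolding rank_def
proof (rule psubset_card_mono)
  show "finite {k. k < length u \<and> prec u k j}" by simp
  show "{k. k < length u \<and> prec u k i} \<subset> {k. k < length u \<and> prec u k j}"
    using assms prec_trans prec_irrefl by blast
qed

lemma rank_lt_iff:
  assumes "i < length u" "j < length u"
  shows "rank u i < rank u j \<longleftrightarrow> prec u i j"
  using rank_lt[OF assms(1)] rank_lt[OF assms(2), of i] prec_total[of i j u] assms
  by (metis less_asym less_irrefl)

lemma rank_less: "j < length u \<Longrightarrow> rank u j < length u"
proof -
  assume j: "j < length u"
  have "{i. i < length u \<and> prec u i j} \<subseteq> {..<length u} - {j}" using prec_irrefl by auto
  then have "rank u j \<le> card ({..<length u} - {j})" unfolding rank_def by (intro card_mono) auto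
  then show ?thesis using j by simp
qed

lemma sorted_nth_eq:
  fixes s :: "nat list"
  assumes "sorted s" "r < length s"
    "card {i. i < length s \<and> s ! i < y} \<le> r" "r < card {i. i < length s \<and> s ! i \<le> y}"
  shows "s ! r = y"
proof (rule ccontr)
  assume ne: "s ! r \<noteq> y"
  show False
  proof (cases "s ! r < y")
    case True
    have "{..r} \<subseteq> {i. i < length s \<and> s ! i < y}"
      using True assms(1,2) by (auto simp: sorted_iff_nth_mono intro: le_less_trans)
    then have "card {..r} \<le> card {i. i < length s \<and> s ! i < y}" by (intro card_mono) auto
    then show False using assms(3) by simp
  next
    case False
    then have gt: "y < s ! r" using ne by simp
    have "{i. i < length s \<and> s ! i \<le> y} \<subseteq> {..<r}"
    proof
      fix i assume "i \<in> {i. i < length s \<and> s ! i \<le> y}"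
      then have "i < length s" "s ! i \<le> y" by auto
      then show "i \<in> {..<r}" using gt assms(1) by (auto simp: sorted_iff_nth_mono not_less[symmetric] dest: spec[of _ r] spec[of _ i]) (meson leI le_less_trans not_le sorted_iff_nth_mono assms(1))
    qed
    then have "card {i. i < length s \<and> s ! i \<le> y} \<le> r" by (metis card_lessThan card_mono finite_lessThan)
    then show False using assms(4) by simp
  qed
qed

lemma card_filter_sort: "card {i. i < length (sort u) \<and> P (sort u ! i)} = card {i. i < length u \<and> P (u ! i)}"
  by (metis length_filter_conv_card filter_sort length_sort sort_key_def)

lemma sort_rank: "j < length u \<Longrightarrow> sort u ! rank u j = u ! j"
proof -
  assume j: "j < length u"
  have sub1: "{i. i < length u \<and> u ! i < u ! j} \<subseteq> {i. i < length u \<and> prec u i j}"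
    by (auto simp: prec_def)
  have sub2: "{i. i < length u \<and> prec u i j} \<subset> {i. i < length u \<and> u ! i \<le> u ! j}"
    using j prec_irrefl by (auto simp: prec_def)
  show ?thesis
  proof (rule sorted_nth_eq)
    show "sorted (sort u)" by simp
    show "rank u j < length (sort u)" using rank_less[OF j] by simp
    show "card {i. i < length (sort u) \<and> sort u ! i < u ! j} \<le> rank u j"
      using card_filter_sort[of u "\<lambda>v. v < u ! j"] card_mono[OF _ sub1] unfolding rank_def by simp
    show "rank u j < card {i. i < length (sort u) \<and> sort u ! i \<le> u ! j}"
      using card_filter_sort[of u "\<lambda>v. v \<le> u ! j"] psubset_card_mono[OF _ sub2] unfolding rank_def by simp
  qed
qed


definition perms :: "nat \<Rightarrow> nat list set" where
  "perms m = {c. length c = m \<and> distinct c \<and> set c = {1..m}}"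

definition Dset :: "nat list \<Rightarrow> nat set" where
  "Dset c = {v. 1 \<le> v \<and> v < length c \<and> pos_in c v < pos_in c (Suc v)}"

definition Inc :: "nat \<Rightarrow> nat \<Rightarrow> nat set \<Rightarrow> nat list set" where
  "Inc N m S = {is. length is = m \<and> (\<forall>i\<in>set is. i < N) \<and>
        (\<forall>j. Suc j < m \<longrightarrow> is ! j \<le> is ! Suc j \<and> (Suc j \<in> S \<longrightarrow> is ! j < is ! Suc j))}"

lemma pos_in_nth: "distinct w \<Longrightarrow> p < length w \<Longrightarrow> pos_in w (w ! p) = p"
  unfolding pos_in_def by (rule the_equality) (auto simp: nth_eq_iff_index_eq)

lemma pos_in_set: "distinct w \<Longrightarrow> v \<in> set w \<Longrightarrow> pos_in w v < length w \<and> w ! pos_in w v = v"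
  by (metis in_set_conv_nth pos_in_nth)

lemma std_nth: "j < length u \<Longrightarrow> std u ! j = Suc (rank u j)"
  by (simp add: std_def)

lemma length_std[simp]: "length (std u) = length u" by (simp add: std_def)

lemma rank_inj: "i < length u \<Longrightarrow> j < length u \<Longrightarrow> rank u i = rank u j \<Longrightarrow> i = j"
  using rank_lt_iff prec_total by (metis less_irrefl)

lemma std_perm: "std u \<in> perms (length u)"
proof -
  let ?m = "length u"
  have d: "distinct (std u)"
    unfolding std_def distinct_map using rank_inj by (auto simp: inj_on_def)
  have s: "set (std u) \<subseteq> {1..?m}"
    unfolding std_def using rank_less by (auto simp: Suc_le_eq)
  have "card (set (std u)) = ?m" using distinct_card[OF d] by simp
  then have "set (std u) = {1..?m}" using s by (intro card_subset_eq) auto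
  then show ?thesis using d by (simp add: perms_def)
qed

lemma stat_std: "stat (std u) = stat u"
  unfolding stat_def
proof (intro arg_cong[where f=card] Collect_cong, clarify)
  fix i j
  show "(i < j \<and> j < length (std u) \<and> std u ! i < std u ! j) = (i < j \<and> j < length u \<and> u ! i < u ! j)"
  proof (cases "i < j \<and> j < length u")
    case True
    then show ?thesis using rank_lt_iff[of i u j] by (auto simp: std_nth prec_def)
  next
    case False then show ?thesis by auto
  qed
qed

lemma sort_Inc:
  assumes u: "u \<in> words N m"
  shows "sort u \<in> Inc N m (Dset (std u))"
proof -
  have len: "length u = m" using u by (simp add: words_def)
  let ?c = "std u"
  have c: "?c \<in> perms m" using std_perm[of u] len by simp
  have dc: "distinct ?c" and sc: "set ?c = {1..m}" using c by (auto simp: perms_def)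
  have "sort u ! j < sort u ! Suc j" if j: "Suc j < m" "Suc j \<in> Dset ?c" for j
  proof -
    define p where "p = pos_in ?c (Suc j)"
    define p' where "p' = pos_in ?c (Suc (Suc j))"
    have pp: "p < p'" using j(2) by (simp add: Dset_def p_def p'_def)
    have "Suc j \<in> set ?c" "Suc (Suc j) \<in> set ?c" using sc j by auto
    then have p1: "p < m" "?c ! p = Suc j" and p2: "p' < m" "?c ! p' = Suc (Suc j)"
      using pos_in_set[OF dc] len unfolding p_def p'_def by auto
    have r1: "rank u p = j" and r2: "rank u p' = Suc j"
      using p1 p2 std_nth[of _ u] len by auto
    have "prec u p p'" using rank_lt_iff[of p u p'] r1 r2 p1 p2 len by simp
    then have "u ! p < u ! p'" using pp by (auto simp: prec_def)
    then show ?thesis using sort_rank[of p u] sort_rank[of p' u] r1 r2 p1 p2 len by simp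
  qed
  moreover have "sort u ! j \<le> sort u ! Suc j" if "Suc j < m" for j
    using that sorted_sort[of u] len by (simp add: sorted_iff_nth_Suc)
  ultimately show ?thesis using u by (auto simp: Inc_def words_def)
qed


definition phi :: "nat list \<Rightarrow> nat list \<Rightarrow> nat list" where
  "phi c is = map (\<lambda>v. is ! (v - 1)) c"

lemma Inc_sorted: "is \<in> Inc N m S \<Longrightarrow> sorted is"
  by (simp add: Inc_def sorted_iff_nth_Suc)

lemma perms_nth: "c \<in> perms m \<Longrightarrow> i < m \<Longrightarrow> 1 \<le> c ! i \<and> c ! i \<le> m"
  unfolding perms_def by (metis (mono_tags, lifting) atLeastAtMost_iff mem_Collect_eq nth_mem)

lemma phi_words:
  assumes c: "c \<in> perms m" and iI: "is \<in> Inc N m S"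
  shows "phi c is \<in> words N m"
proof -
  have len: "length c = m" "length is = m" using c iI by (auto simp: perms_def Inc_def)
  have "is ! (v - 1) < N" if v: "v \<in> set c" for v
  proof -
    have "1 \<le> v" "v \<le> m" using c v by (auto simp: perms_def)
    then have "is ! (v - 1) \<in> set is" using len by (intro nth_mem) simp
    then show ?thesis using iI by (simp add: Inc_def)
  qed
  then show ?thesis using len by (simp add: words_def phi_def)
qed

lemma sort_phi:
  assumes c: "c \<in> perms m" and iI: "is \<in> Inc N m S"
  shows "sort (phi c is) = is"
proof (rule properties_for_sort)
  show "sorted is" using Inc_sorted[OF iI] .
  have s1: "set c = {1..m}" and d: "distinct c" using c unfolding perms_def by blast+
  have s2: "set [1..<Suc m] = {1..m}" by (simp only: set_upt atLeastLessThanSuc_atLeastAtMost)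
  have mc: "mset c = mset [1..<Suc m]"
    by (rule iffD1[OF set_eq_iff_mset_eq_distinct[OF d distinct_upt]]) (simp only: s1 s2)
  have li: "length is = m" using iI by (simp add: Inc_def)
  have mi: "map (\<lambda>v. is ! (v - 1)) [1..<Suc m] = is"
    by (rule nth_equalityI) (simp_all add: li del: upt_Suc)
  have "mset (phi c is) = image_mset (\<lambda>v. is ! (v - 1)) (mset [1..<Suc m])"
    by (simp only: phi_def mset_map mc)
  also have "\<dots> = mset is" by (simp only: mset_map[symmetric] mi)
  finally show "mset is = mset (phi c is)" by simp
qed

lemma chain_lt:
  fixes f :: "nat \<Rightarrow> nat"
  assumes "\<forall>v. a \<le> v \<and> v < b \<longrightarrow> f (Suc v) < f v" "a < b"
  shows "f b < f a"
  using assms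
proof (induction b)
  case 0 then show ?case by simp
next
  case (Suc b)
  show ?case
  proof (cases "a < b")
    case True
    have "f b < f a" using Suc.IH Suc.prems True by auto
    moreover have "f (Suc b) < f b" using Suc.prems True by auto
    ultimately show ?thesis by simp
  next
    case False then have "a = b" using Suc by simp
    then show ?thesis using Suc by simp
  qed
qed

lemma card_perm_less:
  assumes c: "c \<in> perms m" and k: "1 \<le> k" "k \<le> Suc m"
  shows "card {i. i < m \<and> c ! i < k} = k - 1"
proof -
  have len: "length c = m" and d: "distinct c" and s: "set c = {1..m}" using c by (auto simp: perms_def)
  have "(\<lambda>i. c ! i) ` {i. i < m \<and> c ! i < k} = {1..<k}"
  proof
    show "(\<lambda>i. c ! i) ` {i. i < m \<and> c ! i < k} \<subseteq> {1..<k}"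
      using perms_nth[OF c] by auto
    show "{1..<k} \<subseteq> (\<lambda>i. c ! i) ` {i. i < m \<and> c ! i < k}"
    proof
      fix v assume v: "v \<in> {1..<k}"
      then have "v \<in> set c" using s k by auto
      then obtain i where "i < m" "c ! i = v" using len by (auto simp: in_set_conv_nth)
      then show "v \<in> (\<lambda>i. c ! i) ` {i. i < m \<and> c ! i < k}" using v by force
    qed
  qed
  moreover have "inj_on (\<lambda>i. c ! i) {i. i < m \<and> c ! i < k}"
    using d len by (auto simp: inj_on_def nth_eq_iff_index_eq)
  ultimately show ?thesis by (metis card_atLeastLessThan card_image)
qed

lemma std_phi:
  assumes c: "c \<in> perms m" and iI: "is \<in> Inc N m (Dset c)"
  shows "std (phi c is) = c"
proof -
  let ?u = "phi c is"
  have len: "length c = m" and d: "distinct c" and s: "set c = {1..m}" using c by (auto simp: perms_def)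
  have leni: "length is = m" using iI by (simp add: Inc_def)
  have lu: "length ?u = m" using len by (simp add: phi_def)
  have srt: "sorted is" using Inc_sorted[OF iI] .
  have un: "?u ! i = is ! (c ! i - 1)" if "i < m" for i using that len by (simp add: phi_def)
  have fwd: "c ! i < c ! j" if ij: "i < m" "j < m" "prec ?u i j" for i j
  proof (cases "?u ! i < ?u ! j")
    case True
    then have "is ! (c ! i - 1) < is ! (c ! j - 1)" using un ij by simp
    moreover have "c ! i - 1 < m" "c ! j - 1 < m" using perms_nth[OF c ij(1)] perms_nth[OF c ij(2)] by linarith+
    ultimately have "c ! i - 1 < c ! j - 1"
      using srt leni unfolding sorted_iff_nth_mono by (meson not_le)
    then show ?thesis by simp
  next
    case False
    then have eq: "?u ! i = ?u ! j" and ji: "j < i" using ij(3) by (auto simp: prec_def)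
    show ?thesis
    proof (rule ccontr)
      assume "\<not> c ! i < c ! j"
      moreover have "c ! i \<noteq> c ! j" using d ij ji len by (simp add: nth_eq_iff_index_eq)
      ultimately have lt: "c ! j < c ! i" by simp
      have ci: "1 \<le> c ! i" "c ! i \<le> m" and cj: "1 \<le> c ! j" "c ! j \<le> m" using perms_nth[OF c] ij by auto
      have const: "is ! r = is ! (c ! j - 1)" if "c ! j - 1 \<le> r" "r \<le> c ! i - 1" for r
      proof -
        have "is ! (c ! j - 1) \<le> is ! r" "is ! r \<le> is ! (c ! i - 1)"
          using srt leni that ci by (auto simp: sorted_iff_nth_mono)
        moreover have "is ! (c ! i - 1) = is ! (c ! j - 1)" using eq un ij by simp
        ultimately show ?thesis by simp
      qed
      have step: "pos_in c (Suc v) < pos_in c v" if v: "c ! j \<le> v" "v < c ! i" for v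
      proof -
        have v1: "1 \<le> v" "v < m" using v cj ci by auto
        have e1: "is ! (v - 1) = is ! (c ! j - 1)" by (rule const) (use v cj in auto)
        have e2: "is ! v = is ! (c ! j - 1)" by (rule const) (use v cj in auto)
        have "\<forall>j. Suc j < m \<longrightarrow> (Suc j \<in> Dset c \<longrightarrow> is ! j < is ! Suc j)"
          using iI by (simp add: Inc_def)
        then have "Suc (v - 1) < m \<longrightarrow> (Suc (v - 1) \<in> Dset c \<longrightarrow> is ! (v - 1) < is ! Suc (v - 1))"
          by (rule spec)
        moreover have "Suc (v - 1) = v" using v1 by simp
        ultimately have "v \<notin> Dset c" using e1 e2 v1 by auto
        then have "\<not> pos_in c v < pos_in c (Suc v)" using v1 len by (simp add: Dset_def)
        moreover have "v \<in> set c" "Suc v \<in> set c" using s v1 by auto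
        then have "pos_in c v \<noteq> pos_in c (Suc v)" using pos_in_set[OF d] by (metis n_not_Suc_n)
        ultimately show ?thesis by simp
      qed
      have "pos_in c (c ! i) < pos_in c (c ! j)"
        by (rule chain_lt[where f = "pos_in c"]) (use step lt in auto)
      then have "i < j" using pos_in_nth[OF d] ij len by simp
      then show False using ji by simp
    qed
  qed
  have iff: "prec ?u i j \<longleftrightarrow> c ! i < c ! j" if ij: "i < m" "j < m" for i j
  proof
    assume "c ! i < c ! j"
    moreover have "i \<noteq> j" using calculation by auto
    ultimately show "prec ?u i j" using fwd[of j i] prec_total[of i j ?u] ij by auto
  qed (use fwd ij in auto)
  show ?thesis
  proof (rule nth_equalityI)
    show "length (std ?u) = length c" using lu len by simp
    fix j assume "j < length (std ?u)"
    then have j: "j < m" using lu by simp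
    have "{i. i < length ?u \<and> prec ?u i j} = {i. i < m \<and> c ! i < c ! j}"
      using iff j lu by auto
    then have "rank ?u j = card {i. i < m \<and> c ! i < c ! j}"
      unfolding rank_def by simp
    also have "\<dots> = c ! j - 1" using card_perm_less[OF c, of "c ! j"] perms_nth[OF c j] by simp
    finally show "std ?u ! j = c ! j" using std_nth[of j ?u] lu j perms_nth[OF c j] by simp
  qed
qed

lemma phi_std: "phi (std u) (sort u) = u"
  by (rule nth_equalityI) (auto simp: phi_def std_nth sort_rank)



lemma pf_zero: "parking_functions (replicate m 0) = perms m"
  unfolding parking_functions_def perms_def by auto

lemma dinv_zero:
  assumes "length c = m" shows "dinv (replicate m 0) c = stat c"
  unfolding dinv_def stat_def
proof (intro arg_cong[where f=card] Collect_cong, clarify)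
  fix i j
  show "(i < j \<and> j < length (replicate m (0::nat)) \<and>
          (replicate m 0 ! i = replicate m 0 ! j \<and> c ! i < c ! j \<or>
           replicate m 0 ! i = Suc (replicate m 0 ! j) \<and> c ! j < c ! i)) =
        (i < j \<and> j < length c \<and> c ! i < c ! j)"
    using \<open>length c = m\<close> by (cases "i < j \<and> j < m") auto
qed

lemma read_pos_zero: "i < m \<Longrightarrow> read_pos (replicate m 0) i = m - Suc i"
proof -
  assume i: "i < m"
  have "{j. j < length (replicate m (0::nat)) \<and> (replicate m (0::nat) ! j > replicate m 0 ! i \<or>
          (replicate m (0::nat) ! j = replicate m 0 ! i \<and> j > i))} = {Suc i..<m}"
    using i by (auto simp: nth_replicate)
  then show ?thesis unfolding read_pos_def by simp
qed

lemma sigma_zero: "length c = m \<Longrightarrow> sigma_word (replicate m 0) c = rev c"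
proof -
  assume len: "length c = m"
  have th: "(THE i. i < length (replicate m (0::nat)) \<and> read_pos (replicate m 0) i = p) = m - Suc p"
    if p: "p < m" for p
  proof (rule the_equality)
    show "m - Suc p < length (replicate m (0::nat)) \<and> read_pos (replicate m 0) (m - Suc p) = p"
      using p by (simp add: read_pos_zero)
    fix i assume "i < length (replicate m (0::nat)) \<and> read_pos (replicate m 0) i = p"
    then show "i = m - Suc p" using read_pos_zero[of i m] by auto
  qed
  show ?thesis
    unfolding sigma_word_def
    by (rule nth_equalityI) (use len th in \<open>auto simp: rev_nth\<close>)
qed

lemma pos_in_rev:
  assumes "distinct c" "v \<in> set c"
  shows "pos_in (rev c) v = length c - Suc (pos_in c v)"
proof -
  define p where "p = pos_in c v"
  have p: "p < length c" "c ! p = v" using pos_in_set[OF assms] p_def by auto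
  have "rev c ! (length c - Suc p) = v" using p by (simp add: rev_nth)
  moreover have "length c - Suc p < length (rev c)" using p by simp
  ultimately have "pos_in (rev c) v = length c - Suc p"
    using pos_in_nth[of "rev c" "length c - Suc p"] assms(1) by simp
  then show ?thesis by (simp add: p_def)
qed

lemma pides_zero: "c \<in> perms m \<Longrightarrow> pides (replicate m 0) c = Dset c"
proof -
  assume c: "c \<in> perms m"
  have len: "length c = m" and d: "distinct c" and s: "set c = {1..m}" using c by (auto simp: perms_def)
  show ?thesis
    unfolding pides_def sigma_zero[OF len] ides_def Dset_def
  proof (intro Collect_cong)
    fix v
    show "(1 \<le> v \<and> v < length (rev c) \<and> pos_in (rev c) (Suc v) < pos_in (rev c) v) =
          (1 \<le> v \<and> v < length c \<and> pos_in c v < pos_in c (Suc v))"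
    proof (cases "1 \<le> v \<and> v < m")
      case True
      then have "v \<in> set c" "Suc v \<in> set c" using s by auto
      moreover have "pos_in c v < m" "pos_in c (Suc v) < m"
        using pos_in_set[OF d] len calculation by auto
      ultimately show ?thesis using pos_in_rev[OF d] len True by auto
    next
      case False then show ?thesis using len by auto
    qed
  qed
qed

lemma finite_perms: "finite (perms m)"
proof -
  have "perms m \<subseteq> {c. set c \<subseteq> {1..m} \<and> length c = m}" by (auto simp: perms_def)
  then show ?thesis using finite_lists_length_eq[of "{1..m}" m] finite_subset by blast
qed

lemma finite_Inc: "finite (Inc N m S)"
proof -
  have "Inc N m S \<subseteq> words N m" by (auto simp: Inc_def words_def)
  then show ?thesis using finite_words finite_subset by blast
qed

lemma fundQ_Inc: "fundQ N m S x = (\<Sum>is\<in>Inc N m S. prod_list (map x is))"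
  unfolding fundQ_def Inc_def by simp

lemma LLT_W: "LLT N m q x = W N m q x"
proof (cases "m = 0")
  case True then show ?thesis by (simp add: LLT_def W_0)
next
  case False
  have "LLT N m q x = (\<Sum>c\<in>perms m. q ^ stat c * fundQ N m (Dset c) x)"
    unfolding LLT_def LLT_D_def pf_zero if_not_P[OF False]
    by (intro sum.cong refl) (auto simp: dinv_zero pides_zero perms_def)
  also have "\<dots> = (\<Sum>c\<in>perms m. \<Sum>is\<in>Inc N m (Dset c). q ^ stat c * prod_list (map x is))"
    by (simp add: fundQ_Inc sum_distrib_left)
  also have "\<dots> = (\<Sum>(c, is)\<in>(SIGMA c:perms m. Inc N m (Dset c)). q ^ stat c * prod_list (map x is))"
    by (rule sum.Sigma) (auto simp: finite_perms finite_Inc)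
  also have "\<dots> = W N m q x"
    unfolding W_def
  proof (rule sum.reindex_bij_witness[symmetric, where i = "\<lambda>(c, is). phi c is" and j = "\<lambda>u. (std u, sort u)"])
    fix u assume u: "u \<in> words N m"
    have len: "length u = m" using u by (simp add: words_def)
    show "(case (std u, sort u) of (c, is) \<Rightarrow> phi c is) = u" by (simp add: phi_std)
    show "(std u, sort u) \<in> (SIGMA c:perms m. Inc N m (Dset c))"
      using std_perm[of u] sort_Inc[OF u] len by simp
    have "prod_list (map x (sort u)) = prod_list (map x u)"
      by (metis mset_map mset_sort prod_mset_prod_list)
    then show "(case (std u, sort u) of (c, is) \<Rightarrow> q ^ stat c * prod_list (map x is)) =
               q ^ stat u * prod_list (map x u)"
      by (simp add: stat_std)
  next
    fix b assume b: "b \<in> (SIGMA c:perms m. Inc N m (Dset c))"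
    then obtain c iss where bc: "b = (c, iss)" "c \<in> perms m" "iss \<in> Inc N m (Dset c)" by auto
    show "(\<lambda>u. (std u, sort u)) (case b of (c, is) \<Rightarrow> phi c is) = b"
      using bc std_phi[OF bc(2,3)] sort_phi[OF bc(2,3)] by simp
    show "(case b of (c, is) \<Rightarrow> phi c is) \<in> words N m"
      using bc phi_words[OF bc(2,3)] by simp
  qed
  finally show ?thesis .
qed



lemma qpoch_0[simp]: "qpoch q 0 = 1" by (simp add: qpoch_def)
lemma qpoch_Suc: "qpoch q (Suc j) = qpoch q j * (1 - q ^ Suc j)"
  unfolding qpoch_def by (simp add: prod.nat_ivl_Suc' mult.commute)

lemma qpoch_nz:
  assumes "\<forall>i\<in>{1..n}. q ^ i \<noteq> 1" "j \<le> n" shows "qpoch q j \<noteq> 0"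
  using assms unfolding qpoch_def by (auto simp: prod_zero_iff)

definition Ex :: "nat \<Rightarrow> 'a::field \<Rightarrow> 'a \<Rightarrow> 'a fps" where
  "Ex n q y = Abs_fps (\<lambda>j. if j \<le> n then y ^ j / qpoch q j else 0)"

definition T :: "nat \<Rightarrow> 'a::field \<Rightarrow> nat \<Rightarrow> (nat \<Rightarrow> 'a) \<Rightarrow> 'a fps" where
  "T n q N x = (\<Prod>i<N. Ex n q (x i))"

definition eqn :: "nat \<Rightarrow> 'a::comm_ring_1 fps \<Rightarrow> 'a fps \<Rightarrow> bool" where
  "eqn n f g = (\<forall>j\<le>n. fps_nth f j = fps_nth g j)"

lemma eqn_mult: "eqn n f g \<Longrightarrow> eqn n f' g' \<Longrightarrow> eqn n (f * f') (g * g')"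
  unfolding eqn_def fps_mult_nth by auto

lemma eqn_sum: "(\<And>a. a \<in> A \<Longrightarrow> eqn n (f a) (g a)) \<Longrightarrow> eqn n (sum f A) (sum g A)"
  unfolding eqn_def fps_sum_nth by auto

lemma eqn_refl: "eqn n f f" by (simp add: eqn_def)
lemma eqn_sym: "eqn n f g \<Longrightarrow> eqn n g f" by (simp add: eqn_def)
lemma eqn_trans: "eqn n f g \<Longrightarrow> eqn n g h \<Longrightarrow> eqn n f h" by (simp add: eqn_def)

lemma Ex_diff:
  assumes "\<forall>i\<in>{1..n}. q ^ i \<noteq> 1"
  shows "eqn n (Ex n q y - Ex n q (q * y)) (fps_const y * fps_X * Ex n q y)"
  unfolding eqn_def
proof (intro allI impI)
  fix j assume j: "j \<le> n"
  show "fps_nth (Ex n q y - Ex n q (q * y)) j = fps_nth (fps_const y * fps_X * Ex n q y) j"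
  proof (cases j)
    case 0 then show ?thesis by (simp add: Ex_def)
  next
    case (Suc i)
    have nz: "qpoch q (Suc i) \<noteq> 0" "qpoch q i \<noteq> 0" using qpoch_nz[OF assms] j Suc by auto
    have "fps_nth (fps_const y * fps_X * Ex n q y) j = y * (y ^ i / qpoch q i)"
      using Suc j by (simp add: Ex_def mult.assoc)
    moreover have "fps_nth (Ex n q y - Ex n q (q * y)) j = (y ^ j - (q*y)^j) / qpoch q j"
      using j by (simp add: Ex_def diff_divide_distrib)
    moreover have "(y ^ j - (q*y)^j) / qpoch q j = y * (y ^ i / qpoch q i)"
      using nz Suc by (simp add: qpoch_Suc field_simps power_mult_distrib)
    ultimately show ?thesis by simp
  qed
qed

lemma Ex_E:
  assumes "\<forall>i\<in>{1..n}. q ^ i \<noteq> 1"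
  shows "eqn n ((1 - fps_const y * fps_X) * Ex n q y) (Ex n q (q * y))"
  unfolding eqn_def
proof (intro allI impI)
  fix j assume j: "j \<le> n"
  show "fps_nth ((1 - fps_const y * fps_X) * Ex n q y) j = fps_nth (Ex n q (q * y)) j"
  proof (cases j)
    case 0 then show ?thesis by (simp add: Ex_def)
  next
    case (Suc i)
    have nz: "qpoch q (Suc i) \<noteq> 0" "qpoch q i \<noteq> 0" using qpoch_nz[OF assms] j Suc by auto
    have "fps_nth ((1 - fps_const y * fps_X) * Ex n q y) j = y ^ j / qpoch q j - y * (y ^ i / qpoch q i)"
      using Suc j by (simp add: Ex_def algebra_simps)
    moreover have "y ^ j / qpoch q j - y * (y ^ i / qpoch q i) = (q*y)^j / qpoch q j"
      using nz Suc by (simp add: qpoch_Suc field_simps power_mult_distrib)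
    ultimately show ?thesis using j by (simp add: Ex_def)
  qed
qed

lemma scaled_mult:
  fixes f g f' g' :: "'a::field fps"
  assumes "\<forall>j. fps_nth f j = q ^ j * fps_nth g j" "\<forall>j. fps_nth f' j = q ^ j * fps_nth g' j"
  shows "\<forall>j. fps_nth (f * f') j = q ^ j * fps_nth (g * g') j"
proof
  fix j
  have "fps_nth (f * f') j = (\<Sum>i=0..j. q ^ j * (fps_nth g i * fps_nth g' (j - i)))"
    unfolding fps_mult_nth using assms
    by (intro sum.cong refl) (auto simp: power_add[symmetric] mult_ac)
  then show "fps_nth (f * f') j = q ^ j * fps_nth (g * g') j"
    by (simp add: fps_mult_nth sum_distrib_left)
qed

lemma T_Suc: "T n q (Suc N) x = T n q N x * Ex n q (x N)"
  by (simp add: T_def)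

lemma T_scale: "fps_nth (T n q N (\<lambda>i. q * x i)) j = q ^ j * fps_nth (T n q N x) j"
proof -
  have "\<forall>j. fps_nth (T n q N (\<lambda>i. q * x i)) j = q ^ j * fps_nth (T n q N x) j"
  proof (induction N)
    case 0 then show ?case by (simp add: T_def)
  next
    case (Suc N)
    have "\<forall>j. fps_nth (Ex n q (q * x N)) j = q ^ j * fps_nth (Ex n q (x N)) j"
      by (simp add: Ex_def power_mult_distrib)
    from scaled_mult[OF Suc this] show ?case by (simp add: T_Suc)
  qed
  then show ?thesis by blast
qed

lemma T_0: "fps_nth (T n q N x) 0 = 1"
  by (induction N) (simp_all add: T_def Ex_def)

lemma T_cong: "(\<And>i. i < N \<Longrightarrow> x i = y i) \<Longrightarrow> T n q N x = T n q N y"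
  unfolding T_def by (intro prod.cong) auto

lemma T_step:
  assumes "\<forall>i\<in>{1..n}. q ^ i \<noteq> 1" "a < N"
  shows "eqn n (T n q N (\<lambda>b. if b < Suc a then x b else q * x b) - T n q N (\<lambda>b. if b < a then x b else q * x b))
     (fps_const (x a) * fps_X * T n q N (\<lambda>b. if b < Suc a then x b else q * x b))"
proof -
  define Y where "Y = (\<lambda>k b. if b < k then x b else q * x b)"
  define R where "R = (\<Prod>i\<in>{..<N}-{a}. Ex n q (Y (Suc a) i))"
  have R2: "R = (\<Prod>i\<in>{..<N}-{a}. Ex n q (Y a i))"
    unfolding R_def by (intro prod.cong) (auto simp: Y_def)
  have e1: "T n q N (Y (Suc a)) = Ex n q (x a) * R"
    unfolding T_def R_def using assms(2) by (subst prod.remove[of _ a]) (auto simp: Y_def)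
  have e2: "T n q N (Y a) = Ex n q (q * x a) * R"
    unfolding T_def R2 using assms(2) by (subst prod.remove[of _ a]) (auto simp: Y_def)
  have "eqn n ((Ex n q (x a) - Ex n q (q * x a)) * R) ((fps_const (x a) * fps_X * Ex n q (x a)) * R)"
    by (rule eqn_mult[OF Ex_diff[OF assms(1)] eqn_refl])
  then have "eqn n (T n q N (Y (Suc a)) - T n q N (Y a)) (fps_const (x a) * fps_X * T n q N (Y (Suc a)))"
    unfolding e1 e2 by (simp add: algebra_simps)
  then show ?thesis by (simp add: Y_def)
qed

lemma T_tele:
  assumes "\<forall>i\<in>{1..n}. q ^ i \<noteq> 1"
  shows "eqn n (T n q N x - T n q N (\<lambda>i. q * x i))
     (\<Sum>a<N. fps_const (x a) * fps_X * T n q N (\<lambda>b. if b < Suc a then x b else q * x b))"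
proof -
  define Y where "Y = (\<lambda>k b. if b < k then x b else q * x b)"
  have "(\<Sum>a<N. T n q N (Y (Suc a)) - T n q N (Y a)) = T n q N (Y N) - T n q N (Y 0)"
    by (rule sum_lessThan_telescope)
  moreover have "T n q N (Y N) = T n q N x" by (rule T_cong) (simp add: Y_def)
  moreover have "T n q N (Y 0) = T n q N (\<lambda>i. q * x i)" by (simp add: Y_def)
  moreover have "eqn n (\<Sum>a<N. T n q N (Y (Suc a)) - T n q N (Y a))
     (\<Sum>a<N. fps_const (x a) * fps_X * T n q N (Y (Suc a)))"
    by (rule eqn_sum) (use T_step[OF assms] in \<open>simp add: Y_def\<close>)
  ultimately show ?thesis by (simp add: Y_def)
qed

lemma W_T:
  assumes "\<forall>i\<in>{1..n}. q ^ i \<noteq> 1" "m \<le> n"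
  shows "W N m q x = qpoch q m * fps_nth (T n q N x) m"
  using assms(2)
proof (induction m arbitrary: x)
  case 0 then show ?case by (simp add: W_0 T_0)
next
  case (Suc m)
  have "W N (Suc m) q x = (\<Sum>a<N. x a * (qpoch q m * fps_nth (T n q N (\<lambda>b. if b < Suc a then x b else q * x b)) m))"
    unfolding W_Suc using Suc by simp
  also have "\<dots> = qpoch q m * fps_nth (\<Sum>a<N. fps_const (x a) * fps_X * T n q N (\<lambda>b. if b < Suc a then x b else q * x b)) (Suc m)"
    by (simp add: fps_sum_nth sum_distrib_left mult.assoc mult.left_commute)
  also have "\<dots> = qpoch q m * fps_nth (T n q N x - T n q N (\<lambda>i. q * x i)) (Suc m)"
    using T_tele[OF assms(1), of N x] Suc.prems unfolding eqn_def by simp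
  also have "\<dots> = qpoch q (Suc m) * fps_nth (T n q N x) (Suc m)"
    by (simp add: T_scale qpoch_Suc algebra_simps)
  finally show ?case .
qed


lemma elem_0: "elem N 0 x = 1"
proof -
  have "{A. A \<subseteq> {..<N} \<and> card A = 0} = {{}}"
    using finite_subset[of _ "{..<N}"] by fastforce
  thus ?thesis by (simp add: elem_def)
qed

lemma elem_Suc: "elem (Suc N) (Suc k) x = elem N (Suc k) x + x N * elem N k x"
proof -
  let ?A = "{A. A \<subseteq> {..<N} \<and> card A = Suc k}"
  let ?B = "{A. A \<subseteq> {..<N} \<and> card A = k}"
  have fin: "finite {A. A \<subseteq> {..<N'}}" for N' :: nat by simp
  have "{A. A \<subseteq> {..<Suc N} \<and> card A = Suc k} = ?A \<union> insert N ` ?B"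
  proof (rule set_eqI, rule iffI)
    fix A assume "A \<in> {A. A \<subseteq> {..<Suc N} \<and> card A = Suc k}"
    then have A: "A \<subseteq> {..<Suc N}" "card A = Suc k" by auto
    have fA: "finite A" using A(1) finite_subset by blast
    show "A \<in> ?A \<union> insert N ` ?B"
    proof (cases "N \<in> A")
      case True
      then have "A = insert N (A - {N})" "A - {N} \<in> ?B" using A fA by (auto simp: less_Suc_eq)
      then show ?thesis by blast
    next
      case False then show ?thesis using A by (auto simp: less_Suc_eq)
    qed
  next
    fix A assume "A \<in> ?A \<union> insert N ` ?B"
    then show "A \<in> {A. A \<subseteq> {..<Suc N} \<and> card A = Suc k}"
    proof
      assume "A \<in> ?A" then show ?thesis by auto
    next
      assume "A \<in> insert N ` ?B"
      then obtain B where B: "B \<subseteq> {..<N}" "card B = k" "A = insert N B" by auto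
      have "finite B" "N \<notin> B" using B finite_subset by auto
      then show ?thesis using B by auto
    qed
  qed
  moreover have "?A \<inter> insert N ` ?B = {}" by auto
  moreover have "finite ?A" "finite (insert N ` ?B)"
    by (auto intro: finite_subset[OF _ fin[of N]])
  moreover have inj: "inj_on (insert N) ?B"
    unfolding inj_on_def by (metis (no_types, lifting) insert_ident lessThan_iff less_irrefl mem_Collect_eq subsetD)
  moreover have "(\<Sum>A\<in>insert N ` ?B. \<Prod>i\<in>A. x i) = x N * elem N k x"
    unfolding elem_def
    by (subst sum.reindex[OF inj], simp add: sum_distrib_left, intro sum.cong refl)
       (auto intro!: prod.insert dest: finite_subset)
  ultimately show ?thesis unfolding elem_def by (simp add: sum.union_disjoint)
qed

definition E :: "nat \<Rightarrow> (nat \<Rightarrow> 'a::field) \<Rightarrow> 'a fps" where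
  "E N x = (\<Prod>i<N. 1 - fps_const (x i) * fps_X)"

lemma E_coeff: "fps_nth (E N x) k = (-1) ^ k * elem N k x"
proof (induction N arbitrary: k)
  case 0
  show ?case
  proof (cases k)
    case 0 then show ?thesis by (simp add: E_def elem_0)
  next
    case (Suc j)
    have "{A. A \<subseteq> {..<0::nat} \<and> card A = k} = {}" using Suc by auto
    then show ?thesis using Suc unfolding elem_def E_def by (metis lessThan_0 mult_zero_right prod.empty sum.empty fps_one_nth nat.distinct(1))
  qed
next
  case (Suc N)
  have e: "E (Suc N) x = E N x - fps_const (x N) * (fps_X * E N x)"
    by (simp add: E_def algebra_simps)
  show ?case
  proof (cases k)
    case 0 then show ?thesis by (simp add: e Suc elem_0)
  next
    case (Suc j) then show ?thesis by (simp add: e Suc.IH elem_Suc algebra_simps)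
  qed
qed

lemma E_T:
  assumes "\<forall>i\<in>{1..n}. q ^ i \<noteq> 1"
  shows "eqn n (E N x * T n q N x) (T n q N (\<lambda>i. q * x i))"
proof (induction N)
  case 0 then show ?case by (simp add: E_def T_def eqn_refl)
next
  case (Suc N)
  have eq: "E (Suc N) x * T n q (Suc N) x = (E N x * T n q N x) * ((1 - fps_const (x N) * fps_X) * Ex n q (x N))"
    by (simp add: E_def T_Suc mult_ac)
  show ?case unfolding eq unfolding T_Suc by (rule eqn_mult[OF Suc Ex_E[OF assms]])
qed




theorem theorem3p1:
  fixes x :: "nat \<Rightarrow> 'a::field" and q :: 'a and n N :: nat
  assumes "n \<ge> 2"
    and "\<forall>i\<in>{1..n}. q ^ i \<noteq> 1"
  shows "LLT N n q x =
    (\<Sum>k=1..n. (-1) ^ (k - 1) * qpoch q (k - 1) * qbinom q (n - 1) (k - 1)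
                 * elem N k x * LLT N (n - k) q x)"
proof -
  define t where "t j = fps_nth (T n q N x) j" for j
  have "fps_nth (E N x * T n q N x) n = fps_nth (T n q N (\<lambda>i. q * x i)) n"
    using E_T[OF assms(2), of N x] unfolding eqn_def by simp
  then have "(\<Sum>i=0..n. (-1) ^ i * elem N i x * t (n - i)) = q ^ n * t n"
    unfolding fps_mult_nth T_scale E_coeff t_def by simp
  moreover have "(\<Sum>i=0..n. (-1) ^ i * elem N i x * t (n - i)) = t n + (\<Sum>i=1..n. (-1) ^ i * elem N i x * t (n - i))"
    by (simp add: sum.atLeast_Suc_atMost elem_0)
  ultimately have key: "(1 - q ^ n) * t n = (\<Sum>k=1..n. (-1) ^ (k - 1) * elem N k x * t (n - k))"
  proof -
    assume a1: "(\<Sum>i=0..n. (-1) ^ i * elem N i x * t (n - i)) = q ^ n * t n"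
      and a2: "(\<Sum>i=0..n. (-1) ^ i * elem N i x * t (n - i)) = t n + (\<Sum>i=1..n. (-1) ^ i * elem N i x * t (n - i))"
    have "(\<Sum>k=1..n. (-1) ^ (k - 1) * elem N k x * t (n - k)) = - (\<Sum>i=1..n. (-1) ^ i * elem N i x * t (n - i))"
      by (subst sum_negf[symmetric], intro sum.cong refl) (auto simp: power_eq_if)
    then show ?thesis using a1 a2 by (simp add: algebra_simps)
  qed
  have n1: "n = Suc (n - 1)" using assms(1) by simp
  have "LLT N n q x = qpoch q n * t n" unfolding LLT_W t_def by (rule W_T[OF assms(2) order_refl])
  also have "\<dots> = qpoch q (n - 1) * ((1 - q ^ n) * t n)"
    by (subst n1, subst qpoch_Suc) (metis n1 mult.assoc)
  also have "\<dots> = (\<Sum>k=1..n. (-1) ^ (k - 1) * qpoch q (n - 1) * elem N k x * t (n - k))"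
    unfolding key sum_distrib_left by (simp add: mult_ac)
  also have "\<dots> = (\<Sum>k=1..n. (-1) ^ (k - 1) * qpoch q (k - 1) * qbinom q (n - 1) (k - 1)
                 * elem N k x * LLT N (n - k) q x)"
  proof (intro sum.cong refl)
    fix k assume k: "k \<in> {1..n}"
    have nz1: "qpoch q (k - 1) \<noteq> 0" and nz2: "qpoch q (n - k) \<noteq> 0"
      using qpoch_nz[OF assms(2)] k by auto
    have "LLT N (n - k) q x = qpoch q (n - k) * t (n - k)"
      unfolding LLT_W t_def by (rule W_T[OF assms(2)]) simp
    moreover have "n - 1 - (k - 1) = n - k" using k by simp
    ultimately show "(-1) ^ (k - 1) * qpoch q (n - 1) * elem N k x * t (n - k) =
      (-1) ^ (k - 1) * qpoch q (k - 1) * qbinom q (n - 1) (k - 1) * elem N k x * LLT N (n - k) q x"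
      using nz1 nz2 by (simp add: qbinom_def field_simps)
  qed
  finally show ?thesis .
qed

end
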